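(* For every $n\in\mathbb{N}$, every (not necessarily linear) weak-2-local derivation $\Delta: M_n\to M_n$ on the C$^*$-algebra $M_n=M_n(\mathbb{C})$ of complex $n\times n$ matrices is a linear derivation.
   Context: A derivation on a C$^*$-algebra $A$ is a linear map $D:A\to A$ with $D(ab)=D(a)b+aD(b)$. A (not necessarily linear) map $\Delta:A\to A$ is a weak-2-local derivation if for every $a,b\in A$ and every $\phi\in A^*$ there exists a derivation $D_{a,b,\phi}:A\to A$ such that $\phi\Delta(a)=\phi D_{a,b,\phi}(a)$ and $\phi\Delta(b)=\phi D_{a,b,\phi}(b)$. *)

theory Defs
  imports Complex_Main "Jordan_Normal_Form.Matrix"
begin

text \<open>The C*-algebra M_n(C) is represented by carrier_mat n n :: complex mat set.
  Maps are considered only on this carrier.\<close>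

definition is_derivation :: "nat \<Rightarrow> (complex mat \<Rightarrow> complex mat) \<Rightarrow> bool" where
  "is_derivation n D \<longleftrightarrow>
     (\<forall>A \<in> carrier_mat n n. D A \<in> carrier_mat n n) \<and>
     (\<forall>A \<in> carrier_mat n n. \<forall>B \<in> carrier_mat n n. D (A + B) = D A + D B) \<and>
     (\<forall>c. \<forall>A \<in> carrier_mat n n. D (c \<cdot>\<^sub>m A) = c \<cdot>\<^sub>m D A) \<and>
     (\<forall>A \<in> carrier_mat n n. \<forall>B \<in> carrier_mat n n. D (A * B) = D A * B + A * D B)"

text \<open>Elements of the dual space of M_n(C): (complex) linear functionals;
  in finite dimension all linear functionals are continuous.\<close>
definition is_dual_functional :: "nat \<Rightarrow> (complex mat \<Rightarrow> complex) \<Rightarrow> bool" where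
  "is_dual_functional n \<phi> \<longleftrightarrow>
     (\<forall>A \<in> carrier_mat n n. \<forall>B \<in> carrier_mat n n. \<phi> (A + B) = \<phi> A + \<phi> B) \<and>
     (\<forall>c. \<forall>A \<in> carrier_mat n n. \<phi> (c \<cdot>\<^sub>m A) = c * \<phi> A)"

definition weak_2_local_derivation :: "nat \<Rightarrow> (complex mat \<Rightarrow> complex mat) \<Rightarrow> bool" where
  "weak_2_local_derivation n \<Delta> \<longleftrightarrow>
     (\<forall>A \<in> carrier_mat n n. \<Delta> A \<in> carrier_mat n n) \<and>
     (\<forall>A \<in> carrier_mat n n. \<forall>B \<in> carrier_mat n n. \<forall>\<phi>. is_dual_functional n \<phi> \<longrightarrow>
        (\<exists>D. is_derivation n D \<and> \<phi> (\<Delta> A) = \<phi> (D A) \<and> \<phi> (\<Delta> B) = \<phi> (D B)))"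

end

theory Submission
  imports Defs
begin

definition E :: "nat \<Rightarrow> nat \<Rightarrow> nat \<Rightarrow> complex mat" where
  "E n i j = mat n n (\<lambda>(p,q). if p = i \<and> q = j then 1 else 0)"

lemma E_carrier[simp]: "E n i j \<in> carrier_mat n n" by (simp add: E_def)
lemma E_dims[simp]: "dim_row (E n i j) = n" "dim_col (E n i j) = n" by (auto simp: E_def)
lemma index_E[simp]: "p < n \<Longrightarrow> q < n \<Longrightarrow> E n i j $$ (p,q) = (if p = i \<and> q = j then 1 else 0)"
  by (simp add: E_def)

lemma mult_E_right: assumes "A \<in> carrier_mat n n" "p < n" "q < n" "i < n"
  shows "(A * E n i j) $$ (p,q) = (if q = j then A $$ (p,i) else 0)"
  using assms by (auto simp: scalar_prod_def if_distrib cong: if_cong)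

lemma mult_E_left: assumes "A \<in> carrier_mat n n" "p < n" "q < n" "j < n"
  shows "(E n i j * A) $$ (p,q) = (if p = i then A $$ (j,q) else 0)"
proof -
  have "(E n i j * A) $$ (p,q) = (\<Sum>k<n. (if p = i \<and> k = j then 1 else 0) * A $$ (k,q))"
    using assms by (simp add: scalar_prod_def atLeast0LessThan)
  also have "\<dots> = (\<Sum>k<n. if k = j then (if p = i then A $$ (k,q) else 0) else 0)"
    by (rule sum.cong) auto
  finally show ?thesis using assms by simp
qed

lemma E_mult_E: assumes "i < n" "j < n" "k < n" "l < n"
  shows "E n i j * E n k l = (if j = k then E n i l else 0\<^sub>m n n)"
  by (rule eq_matI) (use assms in \<open>auto simp del: index_mult_mat simp: mult_E_right index_mult_mat(2,3)\<close>)

definition tr :: "complex mat \<Rightarrow> complex" where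
  "tr A = (\<Sum>i<dim_row A. A $$ (i,i))"

lemma tr_comm: assumes "A \<in> carrier_mat n n" "B \<in> carrier_mat n n"
  shows "tr (A * B) = tr (B * A)"
proof -
  have "tr (A * B) = (\<Sum>i<n. \<Sum>k<n. A $$ (i,k) * B $$ (k,i))"
    using assms by (simp add: tr_def scalar_prod_def atLeast0LessThan)
  also have "\<dots> = (\<Sum>k<n. \<Sum>i<n. A $$ (i,k) * B $$ (k,i))" by (rule sum.swap)
  also have "\<dots> = tr (B * A)"
    using assms by (simp add: tr_def scalar_prod_def atLeast0LessThan mult.commute)
  finally show ?thesis .
qed

lemma tr_add: assumes "A \<in> carrier_mat n n" "B \<in> carrier_mat n n"
  shows "tr (A + B) = tr A + tr B"
  using assms by (simp add: tr_def sum.distrib)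

lemma tr_minus: assumes "A \<in> carrier_mat n n" "B \<in> carrier_mat n n"
  shows "tr (A - B) = tr A - tr B"
  using assms by (simp add: tr_def sum_subtractf)

lemma tr_smult: assumes "A \<in> carrier_mat n n"
  shows "tr (c \<cdot>\<^sub>m A) = c * tr A"
  using assms by (simp add: tr_def sum_distrib_left)

lemma tr_zero[simp]: "tr (0\<^sub>m n n) = 0" by (simp add: tr_def)

lemma tr_E: assumes "A \<in> carrier_mat n n" "i < n" "j < n"
  shows "tr (A * E n i j) = A $$ (j,i)"
proof -
  have "tr (A * E n i j) = (\<Sum>p<n. if p = j then A $$ (p,i) else 0)"
    unfolding tr_def using assms by (intro sum.cong) (auto simp del: index_mult_mat simp: mult_E_right index_mult_mat(2,3))
  thus ?thesis using assms by simp
qed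

lemma mat_eq_by_tr: assumes "A \<in> carrier_mat n n" "B \<in> carrier_mat n n"
  and "\<And>i j. i < n \<Longrightarrow> j < n \<Longrightarrow> tr (A * E n i j) = tr (B * E n i j)"
  shows "A = B"
proof (rule eq_matI)
  fix p q assume "p < dim_row B" "q < dim_col B"
  hence "p < n" "q < n" using assms by auto
  thus "A $$ (p,q) = B $$ (p,q)" using assms(3)[of q p] assms(1,2) by (simp add: tr_E)
qed (use assms in auto)

definition trunc :: "nat \<Rightarrow> nat \<Rightarrow> complex mat \<Rightarrow> complex mat" where
  "trunc n N x = mat n n (\<lambda>(p,q). if p * n + q < N then x $$ (p,q) else 0)"

lemma trunc_carrier[simp]: "trunc n N x \<in> carrier_mat n n" by (simp add: trunc_def)
lemma trunc_dims[simp]: "dim_row (trunc n N x) = n" "dim_col (trunc n N x) = n" by (auto simp: trunc_def)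

lemma trunc_0: "trunc n 0 x = 0\<^sub>m n n" by (rule eq_matI) (auto simp: trunc_def)

lemma trunc_full: assumes "x \<in> carrier_mat n n" "n * n \<le> N" shows "trunc n N x = x"
proof (rule eq_matI)
  fix p q assume "p < dim_row x" "q < dim_col x"
  hence pq: "p < n" "q < n" using assms by auto
  have "p * n + q < n * n"
  proof -
    have "p * n + q < p * n + n" using pq by simp
    also have "\<dots> = (Suc p) * n" by simp
    also have "\<dots> \<le> n * n" by (rule mult_le_mono1) (use pq in simp)
    finally show ?thesis .
  qed
  thus "trunc n N x $$ (p,q) = x $$ (p,q)" using pq assms by (simp add: trunc_def)
qed (use assms in auto)

lemma pos_eq: fixes p q n N :: nat assumes "q < n" shows "(p * n + q = N) = (p = N div n \<and> q = N mod n)"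
proof
  assume h: "p * n + q = N"
  have n0: "n \<noteq> 0" using assms by auto
  have "(q + p * n) div n = p" "(q + p * n) mod n = q" using assms n0 by (auto simp: div_mult_self1)
  moreover have "q + p * n = N" using h by (simp add: add.commute)
  ultimately show "p = N div n \<and> q = N mod n" by metis
next
  assume "p = N div n \<and> q = N mod n"
  thus "p * n + q = N" by simp
qed

lemma trunc_Suc: assumes "N < n * n"
  shows "trunc n (Suc N) x = trunc n N x + x $$ (N div n, N mod n) \<cdot>\<^sub>m E n (N div n) (N mod n)"
proof (rule eq_matI)
  fix p q assume "p < dim_row (trunc n N x + x $$ (N div n, N mod n) \<cdot>\<^sub>m E n (N div n) (N mod n))"
    "q < dim_col (trunc n N x + x $$ (N div n, N mod n) \<cdot>\<^sub>m E n (N div n) (N mod n))"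
  hence pq: "p < n" "q < n" by auto
  show "trunc n (Suc N) x $$ (p,q) = (trunc n N x + x $$ (N div n, N mod n) \<cdot>\<^sub>m E n (N div n) (N mod n)) $$ (p,q)"
    using pq pos_eq[OF pq(2), of p N] by (auto simp: trunc_def less_Suc_eq)
qed (auto simp: trunc_def)

lemma divmod_lt: fixes N n :: nat assumes "N < n * n" shows "N div n < n" "N mod n < n"
proof -
  have "0 < n" using assms by (cases n) auto
  show "N div n < n" using assms by (simp add: less_mult_imp_div_less)
  show "N mod n < n" using \<open>0 < n\<close> by simp
qed

definition linmap :: "nat \<Rightarrow> (complex mat \<Rightarrow> complex mat) \<Rightarrow> bool" where
  "linmap n L \<longleftrightarrow> (\<forall>x \<in> carrier_mat n n. L x \<in> carrier_mat n n) \<and>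
     (\<forall>x \<in> carrier_mat n n. \<forall>y \<in> carrier_mat n n. L (x + y) = L x + L y) \<and>
     (\<forall>c. \<forall>x \<in> carrier_mat n n. L (c \<cdot>\<^sub>m x) = c \<cdot>\<^sub>m L x)"

lemma smult_zero_carrier: "(A :: complex mat) \<in> carrier_mat n m \<Longrightarrow> 0 \<cdot>\<^sub>m A = 0\<^sub>m n m"
  by (rule eq_matI) auto

lemma linmap_zero: assumes "linmap n L" shows "L (0\<^sub>m n n) = 0\<^sub>m n n"
proof -
  have "L (0\<^sub>m n n) = L (0 \<cdot>\<^sub>m 0\<^sub>m n n)" by simp
  also have "\<dots> = 0 \<cdot>\<^sub>m L (0\<^sub>m n n)" using assms zero_carrier_mat unfolding linmap_def by blast
  also have "\<dots> = 0\<^sub>m n n" using assms unfolding linmap_def by (simp add: smult_zero_carrier)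
  finally show ?thesis .
qed

lemma linmap_agree: assumes "linmap n L1" "linmap n L2"
  and "\<And>i j. i < n \<Longrightarrow> j < n \<Longrightarrow> L1 (E n i j) = L2 (E n i j)"
  and x: "x \<in> carrier_mat n n"
  shows "L1 x = L2 x"
proof -
  have "L1 (trunc n N x) = L2 (trunc n N x)" for N
  proof (induction N)
    case 0 thus ?case using linmap_zero[OF assms(1)] linmap_zero[OF assms(2)] by (simp add: trunc_0)
  next
    case (Suc N)
    show ?case
    proof (cases "N < n * n")
      case True
      note dm = divmod_lt[OF True]
      have "L1 (trunc n (Suc N) x) = L1 (trunc n N x) + x $$ (N div n, N mod n) \<cdot>\<^sub>m L1 (E n (N div n) (N mod n))"
        using assms(1) unfolding trunc_Suc[OF True] linmap_def by simp
      also have "\<dots> = L2 (trunc n N x) + x $$ (N div n, N mod n) \<cdot>\<^sub>m L2 (E n (N div n) (N mod n))"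
        using Suc assms(3)[OF dm] by simp
      also have "\<dots> = L2 (trunc n (Suc N) x)"
        using assms(2) unfolding trunc_Suc[OF True] linmap_def by simp
      finally show ?thesis .
    next
      case False
      thus ?thesis using Suc trunc_full[OF x] by simp
    qed
  qed
  from this[of "n*n"] show ?thesis using trunc_full[OF x] by simp
qed

lemma deriv_linmap: "is_derivation n D \<Longrightarrow> linmap n D"
  unfolding is_derivation_def linmap_def by blast

lemma inner_linmap: assumes a: "a \<in> carrier_mat n n" shows "linmap n (\<lambda>x. a * x - x * a)"
  unfolding linmap_def
proof (intro conjI ballI allI)
  fix x :: "complex mat" assume x: "x \<in> carrier_mat n n"
  show "a * x - x * a \<in> carrier_mat n n" using a x by (auto intro: minus_carrier_mat)
next
  fix x y :: "complex mat" assume x: "x \<in> carrier_mat n n" and y: "y \<in> carrier_mat n n"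
  have 1: "a * (x + y) = a * x + a * y" using a x y by (simp add: mult_add_distrib_mat)
  have 2: "(x + y) * a = x * a + y * a" using a x y by (simp add: add_mult_distrib_mat)
  show "a * (x + y) - (x + y) * a = a * x - x * a + (a * y - y * a)"
    unfolding 1 2 by (rule eq_matI) (use a x y in auto)
next
  fix c and x :: "complex mat" assume x: "x \<in> carrier_mat n n"
  have 1: "a * (c \<cdot>\<^sub>m x) = c \<cdot>\<^sub>m (a * x)" using a x by (simp add: mult_smult_distrib)
  have 2: "(c \<cdot>\<^sub>m x) * a = c \<cdot>\<^sub>m (x * a)" using a x by (simp add: mult_smult_assoc_mat)
  show "a * (c \<cdot>\<^sub>m x) - c \<cdot>\<^sub>m x * a = c \<cdot>\<^sub>m (a * x - x * a)"
    unfolding 1 2 by (rule eq_matI) (use a x in \<open>auto simp: right_diff_distrib\<close>)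
qed

definition inner_of :: "nat \<Rightarrow> (complex mat \<Rightarrow> complex mat) \<Rightarrow> complex mat" where
  "inner_of n D = mat n n (\<lambda>(p,q). D (E n q 0) $$ (p,0))"

lemma inner_of_carrier[simp]: "inner_of n D \<in> carrier_mat n n" by (simp add: inner_of_def)
lemma inner_of_dims[simp]: "dim_row (inner_of n D) = n" "dim_col (inner_of n D) = n" by (auto simp: inner_of_def)

lemma deriv_E: assumes D: "is_derivation n D" and n: "0 < n"
  and ij: "i < n" "j < n" and pq: "p < n" "q < n"
  shows "D (E n i j) $$ (p,q) = (if q = j then D (E n i 0) $$ (p,0) else 0) - (if p = i then D (E n q 0) $$ (j,0) else 0)"
proof -
  have Dc: "\<And>x. x \<in> carrier_mat n n \<Longrightarrow> D x \<in> carrier_mat n n" using D unfolding is_derivation_def by blast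
  have Dl: "\<And>x y. x \<in> carrier_mat n n \<Longrightarrow> y \<in> carrier_mat n n \<Longrightarrow> D (x * y) = D x * y + x * D y"
    using D unfolding is_derivation_def by blast
  have D0: "D (0\<^sub>m n n) = 0\<^sub>m n n" using linmap_zero[OF deriv_linmap[OF D]] .
  have b: "D (E n 0 0) $$ (0,0) = 0"
  proof -
    have "E n 0 0 * E n 0 0 = E n 0 0" using n by (simp add: E_mult_E)
    hence "D (E n 0 0) = D (E n 0 0) * E n 0 0 + E n 0 0 * D (E n 0 0)" using Dl[of "E n 0 0" "E n 0 0"] by simp
    hence "D (E n 0 0) $$ (0,0) = (D (E n 0 0) * E n 0 0 + E n 0 0 * D (E n 0 0)) $$ (0,0)" by simp
    also have "\<dots> = D (E n 0 0) $$ (0,0) + D (E n 0 0) $$ (0,0)"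
      using n Dc[of "E n 0 0"] by (simp del: index_mult_mat add: index_mult_mat(2,3) mult_E_right mult_E_left)
    finally show ?thesis by simp
  qed
  have c: "D (E n 0 j') $$ (0,q') = - D (E n q' 0) $$ (j',0)" if "j' < n" "q' < n" for j' q'
  proof -
    have "E n 0 j' * E n q' 0 = (if j' = q' then E n 0 0 else 0\<^sub>m n n)" using n that by (simp add: E_mult_E)
    hence "D (E n 0 j' * E n q' 0) $$ (0,0) = 0" using b D0 n by auto
    moreover have "D (E n 0 j' * E n q' 0) $$ (0,0) = D (E n 0 j') $$ (0,q') + D (E n q' 0) $$ (j',0)"
      using Dl[of "E n 0 j'" "E n q' 0"] n that Dc[of "E n 0 j'"] Dc[of "E n q' 0"]
      by (simp del: index_mult_mat add: index_mult_mat(2,3) mult_E_right mult_E_left)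
    ultimately show ?thesis by (simp add: add_eq_0_iff)
  qed
  have "E n i j = E n i 0 * E n 0 j" using n ij by (simp add: E_mult_E)
  hence "D (E n i j) $$ (p,q) = (D (E n i 0) * E n 0 j + E n i 0 * D (E n 0 j)) $$ (p,q)"
    using Dl[of "E n i 0" "E n 0 j"] n ij by simp
  also have "\<dots> = (if q = j then D (E n i 0) $$ (p,0) else 0) + (if p = i then D (E n 0 j) $$ (0,q) else 0)"
    using n ij pq Dc[of "E n i 0"] Dc[of "E n 0 j"]
    by (simp del: index_mult_mat add: index_mult_mat(2,3) mult_E_right mult_E_left)
  finally show ?thesis using c[OF ij(2) pq(2)] by simp
qed

lemma deriv_inner: assumes D: "is_derivation n D" and n: "0 < n" and x: "x \<in> carrier_mat n n"
  shows "D x = inner_of n D * x - x * inner_of n D"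
proof -
  let ?a = "inner_of n D"
  have "D x = (\<lambda>x. ?a * x - x * ?a) x"
  proof (rule linmap_agree[OF deriv_linmap[OF D] inner_linmap[OF inner_of_carrier] _ x])
    fix i j assume ij: "i < n" "j < n"
    have Dc: "D (E n i j) \<in> carrier_mat n n" using D E_carrier unfolding is_derivation_def by blast
    show "D (E n i j) = ?a * E n i j - E n i j * ?a"
    proof (rule eq_matI)
      fix p q assume "p < dim_row (?a * E n i j - E n i j * ?a)" "q < dim_col (?a * E n i j - E n i j * ?a)"
      hence pq: "p < n" "q < n" by auto
      show "D (E n i j) $$ (p,q) = (?a * E n i j - E n i j * ?a) $$ (p,q)"
        using deriv_E[OF D n ij pq] pq ij
        by (simp del: index_mult_mat add: index_mult_mat(2,3) mult_E_right mult_E_left inner_of_def)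
    qed (use Dc in auto)
  qed
  thus ?thesis by simp
qed

lemma inner_tr: assumes a: "a \<in> carrier_mat n n" and z: "z \<in> carrier_mat n n" and y: "y \<in> carrier_mat n n"
  shows "tr ((a * z - z * a) * y) = tr (a * (z * y - y * z))"
proof -
  have "tr ((a * z - z * a) * y) = tr (a * z * y - z * a * y)"
    using a z y by (subst minus_mult_distrib_mat) auto
  also have "\<dots> = tr (a * z * y) - tr (z * a * y)" using a z y by (intro tr_minus) auto
  also have "tr (z * a * y) = tr (z * (a * y))" using a z y by simp
  also have "\<dots> = tr ((a * y) * z)" using a z y by (intro tr_comm) auto
  also have "\<dots> = tr (a * (y * z))" using a z y by simp
  also have "tr (a * z * y) = tr (a * (z * y))" using a z y by simp
  also have "tr (a * (z * y)) - tr (a * (y * z)) = tr (a * (z * y) - a * (y * z))"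
    by (rule tr_minus[symmetric, of _ n]) (use a z y in auto)
  also have "a * (z * y) - a * (y * z) = a * (z * y - y * z)"
    by (rule mult_minus_distrib_mat[symmetric, of _ n n]) (use a z y in auto)
  finally show ?thesis .
qed

definition Kprop :: "nat \<Rightarrow> (complex mat \<Rightarrow> complex mat) \<Rightarrow> bool" where
  "Kprop n \<Delta> \<longleftrightarrow> (\<forall>x \<in> carrier_mat n n. \<forall>x' \<in> carrier_mat n n. \<forall>y \<in> carrier_mat n n.
     (x - x') * y = y * (x - x') \<longrightarrow> tr (\<Delta> x * y) = tr (\<Delta> x' * y))"

definition Hprop :: "nat \<Rightarrow> (complex mat \<Rightarrow> complex mat) \<Rightarrow> bool" where
  "Hprop n \<Delta> \<longleftrightarrow> (\<forall>x \<in> carrier_mat n n. \<forall>c. \<Delta> (c \<cdot>\<^sub>m x) = c \<cdot>\<^sub>m \<Delta> x)"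

definition Cprop :: "nat \<Rightarrow> (complex mat \<Rightarrow> complex mat) \<Rightarrow> bool" where
  "Cprop n \<Delta> \<longleftrightarrow> (\<forall>x \<in> carrier_mat n n. \<Delta> x \<in> carrier_mat n n)"

lemma w2l_C: "weak_2_local_derivation n \<Delta> \<Longrightarrow> Cprop n \<Delta>"
  unfolding weak_2_local_derivation_def Cprop_def by blast

lemma w2l_H: assumes w: "weak_2_local_derivation n \<Delta>" shows "Hprop n \<Delta>"
  unfolding Hprop_def
proof (intro ballI allI)
  fix x :: "complex mat" and c assume x: "x \<in> carrier_mat n n"
  have cx: "c \<cdot>\<^sub>m x \<in> carrier_mat n n" using x by simp
  have C1: "\<Delta> x \<in> carrier_mat n n" "\<Delta> (c \<cdot>\<^sub>m x) \<in> carrier_mat n n"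
    using w x cx unfolding weak_2_local_derivation_def by blast+
  show "\<Delta> (c \<cdot>\<^sub>m x) = c \<cdot>\<^sub>m \<Delta> x"
  proof (rule eq_matI)
    fix p q assume "p < dim_row (c \<cdot>\<^sub>m \<Delta> x)" "q < dim_col (c \<cdot>\<^sub>m \<Delta> x)"
    hence pq: "p < n" "q < n" using C1 by auto
    have "is_dual_functional n (\<lambda>M. M $$ (p,q))"
      unfolding is_dual_functional_def using pq by auto
    then obtain D where D: "is_derivation n D" and e1: "\<Delta> (c \<cdot>\<^sub>m x) $$ (p,q) = D (c \<cdot>\<^sub>m x) $$ (p,q)"
      and e2: "\<Delta> x $$ (p,q) = D x $$ (p,q)"
      using w cx x unfolding weak_2_local_derivation_def by blast
    have "D (c \<cdot>\<^sub>m x) = c \<cdot>\<^sub>m D x" using D x unfolding is_derivation_def by blast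
    moreover have "D x \<in> carrier_mat n n" using D x unfolding is_derivation_def by blast
    ultimately show "\<Delta> (c \<cdot>\<^sub>m x) $$ (p,q) = (c \<cdot>\<^sub>m \<Delta> x) $$ (p,q)"
      using e1 e2 pq C1 by simp
  qed (use C1 in auto)
qed

lemma comm_diff: fixes x x' y :: "complex mat" assumes x: "x \<in> carrier_mat n n" and x': "x' \<in> carrier_mat n n" and y: "y \<in> carrier_mat n n"
  and h: "(x - x') * y = y * (x - x')"
  shows "x * y - y * x = x' * y - y * x'"
proof -
  have "(x - x') * y = x * y - x' * y" by (rule minus_mult_distrib_mat[OF x x' y])
  moreover have "y * (x - x') = y * x - y * x'" by (rule mult_minus_distrib_mat[OF y x x'])
  ultimately have h2: "x * y - x' * y = y * x - y * x'" using h by simp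
  show ?thesis
  proof (rule eq_matI)
    fix p q assume "p < dim_row (x' * y - y * x')" "q < dim_col (x' * y - y * x')"
    hence pq: "p < n" "q < n" using x x' y by auto
    have "(x * y - x' * y) $$ (p,q) = (y * x - y * x') $$ (p,q)" using h2 by simp
    hence "(x * y) $$ (p,q) - (x' * y) $$ (p,q) = (y * x) $$ (p,q) - (y * x') $$ (p,q)"
      using pq x x' y by (simp del: index_mult_mat add: index_mult_mat(2,3))
    thus "(x * y - y * x) $$ (p,q) = (x' * y - y * x') $$ (p,q)"
      using pq x x' y by (simp del: index_mult_mat add: index_mult_mat(2,3) algebra_simps)
  qed (use x x' y in auto)
qed

lemma w2l_K: assumes w: "weak_2_local_derivation n \<Delta>" and n: "0 < n" shows "Kprop n \<Delta>"
  unfolding Kprop_def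
proof (intro ballI impI)
  fix x x' y :: "complex mat" assume x: "x \<in> carrier_mat n n" and x': "x' \<in> carrier_mat n n" and y: "y \<in> carrier_mat n n"
    and h: "(x - x') * y = y * (x - x')"
  have "is_dual_functional n (\<lambda>M. tr (M * y))"
    unfolding is_dual_functional_def
  proof (intro conjI ballI allI)
    fix A B :: "complex mat" assume A: "A \<in> carrier_mat n n" and B: "B \<in> carrier_mat n n"
    show "tr ((A + B) * y) = tr (A * y) + tr (B * y)"
      using A B y by (simp add: add_mult_distrib_mat tr_add[of _ n])
  next
    fix c and A :: "complex mat" assume A: "A \<in> carrier_mat n n"
    show "tr ((c \<cdot>\<^sub>m A) * y) = c * tr (A * y)"
      using A y by (simp add: mult_smult_assoc_mat tr_smult[of _ n])
  qed
  then obtain D where D: "is_derivation n D" and e1: "tr (\<Delta> x * y) = tr (D x * y)"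
    and e2: "tr (\<Delta> x' * y) = tr (D x' * y)"
    using w x x' unfolding weak_2_local_derivation_def by blast
  let ?a = "inner_of n D"
  have "tr (D x * y) = tr (?a * (x * y - y * x))"
    using deriv_inner[OF D n x] inner_tr[OF inner_of_carrier x y] by simp
  also have "\<dots> = tr (?a * (x' * y - y * x'))" using comm_diff[OF x x' y h] by simp
  also have "\<dots> = tr (D x' * y)"
    using deriv_inner[OF D n x'] inner_tr[OF inner_of_carrier x' y] by simp
  finally show "tr (\<Delta> x * y) = tr (\<Delta> x' * y)" using e1 e2 by simp
qed

definition AL :: "nat \<Rightarrow> (complex mat \<Rightarrow> complex) \<Rightarrow> bool" where
  "AL n h \<longleftrightarrow> (\<forall>x \<in> carrier_mat n n. \<forall>i<n. \<forall>j<n. \<forall>c.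
      h (x + c \<cdot>\<^sub>m E n i j) = h x + c * (h (x + E n i j) - h x))"

definition Hom :: "nat \<Rightarrow> int \<Rightarrow> (complex mat \<Rightarrow> complex) \<Rightarrow> bool" where
  "Hom n k h \<longleftrightarrow> (\<forall>x \<in> carrier_mat n n. \<forall>l. l \<noteq> 0 \<longrightarrow> h (l \<cdot>\<^sub>m x) = l powi k * h x)"

lemma ALD: "AL n h \<Longrightarrow> x \<in> carrier_mat n n \<Longrightarrow> i < n \<Longrightarrow> j < n \<Longrightarrow>
   h (x + c \<cdot>\<^sub>m E n i j) = h x + c * (h (x + E n i j) - h x)"
  unfolding AL_def by blast

lemma HomD: "Hom n k h \<Longrightarrow> x \<in> carrier_mat n n \<Longrightarrow> l \<noteq> 0 \<Longrightarrow> h (l \<cdot>\<^sub>m x) = l powi k * h x"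
  unfolding Hom_def by blast

lemma add_swap: fixes x a b :: "complex mat"
  assumes "x \<in> carrier_mat n n" "a \<in> carrier_mat n n" "b \<in> carrier_mat n n"
  shows "x + a + b = x + b + a"
  by (rule eq_matI) (use assms in auto)

lemma slope_AL: assumes h: "AL n h" and ij: "i < n" "j < n"
  shows "AL n (\<lambda>y. h (y + E n i j) - h y)"
  unfolding AL_def
proof (intro ballI allI impI)
  fix x :: "complex mat" and i' j' c assume x: "x \<in> carrier_mat n n" and ij': "i' < n" "j' < n"
  let ?E = "E n i j" and ?F = "E n i' j'"
  have 1: "h (x + ?E + c \<cdot>\<^sub>m ?F) = h (x + ?E) + c * (h (x + ?E + ?F) - h (x + ?E))"
    using x ij' by (intro ALD[OF h]) auto
  have 2: "h (x + c \<cdot>\<^sub>m ?F) = h x + c * (h (x + ?F) - h x)"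
    using x ij' by (intro ALD[OF h]) auto
  have 3: "x + c \<cdot>\<^sub>m ?F + ?E = x + ?E + c \<cdot>\<^sub>m ?F" using x by (intro add_swap) auto
  have 4: "x + ?F + ?E = x + ?E + ?F" using x by (intro add_swap) auto
  show "h (x + c \<cdot>\<^sub>m ?F + ?E) - h (x + c \<cdot>\<^sub>m ?F) =
        h (x + ?E) - h x + c * (h (x + ?F + ?E) - h (x + ?F) - (h (x + ?E) - h x))"
    unfolding 3 4 1 2 by (simp add: algebra_simps)
qed

lemma slope_Hom: assumes h: "AL n h" "Hom n k h" and ij: "i < n" "j < n"
  shows "Hom n (k - 1) (\<lambda>y. h (y + E n i j) - h y)"
  unfolding Hom_def
proof (intro ballI allI impI)
  fix y :: "complex mat" and l :: complex assume y: "y \<in> carrier_mat n n" and l: "l \<noteq> 0"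
  let ?E = "E n i j"
  have 1: "l \<cdot>\<^sub>m y + ?E = l \<cdot>\<^sub>m (y + inverse l \<cdot>\<^sub>m ?E)"
    by (rule eq_matI) (use y l in \<open>auto simp: field_simps\<close>)
  have 2: "h (l \<cdot>\<^sub>m (y + inverse l \<cdot>\<^sub>m ?E)) = l powi k * h (y + inverse l \<cdot>\<^sub>m ?E)"
    using h(2) y l unfolding Hom_def by simp
  have 3: "h (y + inverse l \<cdot>\<^sub>m ?E) = h y + inverse l * (h (y + ?E) - h y)"
    using h(1) y ij unfolding AL_def by simp
  have 4: "h (l \<cdot>\<^sub>m y) = l powi k * h y" using h(2) y l unfolding Hom_def by simp
  have 5: "l powi (k - 1) = l powi k / l" using l by (simp add: power_int_diff)
  show "h (l \<cdot>\<^sub>m y + ?E) - h (l \<cdot>\<^sub>m y) = l powi (k - 1) * (h (y + ?E) - h y)"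
    unfolding 1 2 3 4 5 using l by (simp add: field_simps)
qed

lemma two_powi_neq1: assumes "k < 0" shows "(2::complex) powi k \<noteq> 1"
proof
  assume a: "(2::complex) powi k = 1"
  have "k = - int (nat (-k))" using assms by simp
  hence "(2::complex) powi k = inverse (2 ^ nat (-k))"
    by (metis power_int_minus power_int_of_nat)
  hence "(2::complex) ^ nat (-k) = 1" using a by (metis inverse_1 inverse_inverse_eq)
  hence "(2::nat) ^ nat (-k) = 1"
    by (metis of_nat_eq_1_iff of_nat_numeral of_nat_power)
  moreover have "nat (-k) > 0" using assms by simp
  ultimately show False by simp
qed

lemma const_lemma:
  "\<forall>k h. k \<le> 0 \<longrightarrow> AL n h \<longrightarrow> Hom n k h \<longrightarrow>
     (\<forall>x \<in> carrier_mat n n. h (trunc n N x) = (if k = 0 then h (0\<^sub>m n n) else 0))"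
proof (induction N)
  case 0
  show ?case
  proof (intro allI impI ballI)
    fix k h and x :: "complex mat" assume k: "k \<le> 0" and h: "AL n h" "Hom n k h" and x: "x \<in> carrier_mat n n"
    show "h (trunc n 0 x) = (if k = 0 then h (0\<^sub>m n n) else 0)"
    proof (cases "k = 0")
      case False
      have "h (0\<^sub>m n n) = h (2 \<cdot>\<^sub>m 0\<^sub>m n n)" by simp
      also have "\<dots> = 2 powi k * h (0\<^sub>m n n)" by (rule HomD[OF h(2)]) auto
      finally have "(1 - 2 powi k) * h (0\<^sub>m n n) = 0" by (simp add: algebra_simps)
      moreover have "1 - (2::complex) powi k \<noteq> 0" using two_powi_neq1[of k] False k by simp
      ultimately have "h (0\<^sub>m n n) = 0" by simp
      thus ?thesis using False by (simp add: trunc_0)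
    qed (simp add: trunc_0)
  qed
next
  case (Suc N)
  show ?case
  proof (intro allI impI ballI)
    fix k h and x :: "complex mat" assume k: "k \<le> 0" and h: "AL n h" "Hom n k h" and x: "x \<in> carrier_mat n n"
    show "h (trunc n (Suc N) x) = (if k = 0 then h (0\<^sub>m n n) else 0)"
    proof (cases "N < n * n")
      case True
      note dm = divmod_lt[OF True]
      let ?i = "N div n" and ?j = "N mod n"
      let ?S = "\<lambda>y. h (y + E n ?i ?j) - h y"
      have S: "AL n ?S" "Hom n (k - 1) ?S" using slope_AL[OF h(1) dm] slope_Hom[OF h dm] by auto
      have "?S (trunc n N x) = (if k - 1 = 0 then ?S (0\<^sub>m n n) else 0)"
        using Suc.IH[THEN spec[of _ "k-1"], THEN spec[of _ ?S]] S k x by simp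
      hence "?S (trunc n N x) = 0" using k by simp
      moreover have "h (trunc n (Suc N) x) = h (trunc n N x) + x $$ (?i, ?j) * ?S (trunc n N x)"
        unfolding trunc_Suc[OF True] using h(1) dm unfolding AL_def by simp
      ultimately show ?thesis using Suc.IH k h x by simp
    next
      case False
      hence "trunc n (Suc N) x = trunc n N x" using trunc_full[OF x] by simp
      thus ?thesis using Suc.IH k h x by simp
    qed
  qed
qed

lemma AL_additive: assumes h: "AL n h" "Hom n 1 h" and x: "x \<in> carrier_mat n n" and z: "z \<in> carrier_mat n n"
  shows "h (x + z) = h x + h z"
proof -
  have h0: "h (0\<^sub>m n n) = 0"
  proof -
    have "h (0\<^sub>m n n) = h (2 \<cdot>\<^sub>m 0\<^sub>m n n)" by simp
    also have "\<dots> = 2 powi 1 * h (0\<^sub>m n n)" by (rule HomD[OF h(2)]) auto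
    finally show ?thesis by simp
  qed
  have slope: "h (y + c \<cdot>\<^sub>m E n i j) = h y + c * h (E n i j)"
    if y: "y \<in> carrier_mat n n" and ij: "i < n" "j < n" for y c i j
  proof -
    let ?S = "\<lambda>y. h (y + E n i j) - h y"
    have S: "AL n ?S" "Hom n 0 ?S" using slope_AL[OF h(1) ij] slope_Hom[OF h ij] by auto
    have "?S (trunc n (n*n) y) = ?S (0\<^sub>m n n)"
      using const_lemma[of n "n*n", THEN spec[of _ 0], THEN spec[of _ ?S]] S y by simp
    hence "?S y = h (E n i j)" using trunc_full[OF y] h0 by simp
    moreover have "h (y + c \<cdot>\<^sub>m E n i j) = h y + c * ?S y" using h(1) y ij unfolding AL_def by simp
    ultimately show ?thesis by simp
  qed
  have "h (trunc n N x + z) = h (trunc n N x) + h z" for N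
  proof (induction N)
    case 0 thus ?case using z h0 by (simp add: trunc_0)
  next
    case (Suc N)
    show ?case
    proof (cases "N < n * n")
      case True
      note dm = divmod_lt[OF True]
      let ?i = "N div n" and ?j = "N mod n"
      let ?a = "x $$ (?i, ?j)"
      have e: "trunc n N x + ?a \<cdot>\<^sub>m E n ?i ?j + z = (trunc n N x + z) + ?a \<cdot>\<^sub>m E n ?i ?j"
        using z by (intro add_swap) auto
      show ?thesis unfolding trunc_Suc[OF True] e
        using slope[OF _ dm, of "trunc n N x + z" ?a] slope[OF _ dm, of "trunc n N x" ?a] Suc z by simp
    next
      case False
      hence "trunc n (Suc N) x = trunc n N x" using trunc_full[OF x] by simp
      thus ?thesis using Suc by simp
    qed
  qed
  from this[of "n*n"] show ?thesis using trunc_full[OF x] by simp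
qed

lemma KD: "Kprop n \<Delta> \<Longrightarrow> x \<in> carrier_mat n n \<Longrightarrow> x' \<in> carrier_mat n n \<Longrightarrow> y \<in> carrier_mat n n \<Longrightarrow>
  (x - x') * y = y * (x - x') \<Longrightarrow> tr (\<Delta> x * y) = tr (\<Delta> x' * y)"
  unfolding Kprop_def by blast

lemma CD: "Cprop n \<Delta> \<Longrightarrow> x \<in> carrier_mat n n \<Longrightarrow> \<Delta> x \<in> carrier_mat n n"
  unfolding Cprop_def by blast

lemma HD: "Hprop n \<Delta> \<Longrightarrow> x \<in> carrier_mat n n \<Longrightarrow> \<Delta> (c \<cdot>\<^sub>m x) = c \<cdot>\<^sub>m \<Delta> x"
  unfolding Hprop_def by blast

lemma diff_simp1: fixes x w :: "complex mat" assumes "x \<in> carrier_mat n n" "w \<in> carrier_mat n n"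
  shows "x + w - x = w" by (rule eq_matI) (use assms in auto)

lemma diff_simp2: fixes x u v :: "complex mat" assumes "x \<in> carrier_mat n n" "u \<in> carrier_mat n n" "v \<in> carrier_mat n n"
  shows "x + (u + v) - (x + v) = u" "x + (u + v) - (x + u) = v"
  by (rule eq_matI, use assms in auto)+

lemma tr_lin_right: fixes M u v :: "complex mat"
  assumes "M \<in> carrier_mat n n" "u \<in> carrier_mat n n" "v \<in> carrier_mat n n"
  shows "tr (M * (u + c \<cdot>\<^sub>m v)) = tr (M * u) + c * tr (M * v)"
proof -
  have "M * (u + c \<cdot>\<^sub>m v) = M * u + c \<cdot>\<^sub>m (M * v)"
    using assms by (simp add: mult_add_distrib_mat mult_smult_distrib)
  thus ?thesis using assms by (simp add: tr_add[of _ n] tr_smult[of _ n])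
qed

lemma key_identity: assumes K: "Kprop n \<Delta>" and C: "Cprop n \<Delta>"
  and x: "x \<in> carrier_mat n n" and u: "u \<in> carrier_mat n n" and e: "e \<in> carrier_mat n n"
  shows "tr (\<Delta> (x + c \<cdot>\<^sub>m e) * u) = tr (\<Delta> x * u) + c * (tr (\<Delta> x * e) - tr (\<Delta> (x + u) * e))"
proof -
  let ?w = "u + c \<cdot>\<^sub>m e"
  have w: "?w \<in> carrier_mat n n" using u e by simp
  have 1: "tr (\<Delta> (x + ?w) * ?w) = tr (\<Delta> x * ?w)"
    by (rule KD[OF K]) (use x w in \<open>auto simp: diff_simp1\<close>)
  have 2: "tr (\<Delta> (x + ?w) * u) = tr (\<Delta> (x + c \<cdot>\<^sub>m e) * u)"
    by (rule KD[OF K]) (use x u e in \<open>auto simp: diff_simp2\<close>)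
  have 3: "tr (\<Delta> (x + ?w) * e) = tr (\<Delta> (x + u) * e)"
  proof (rule KD[OF K])
    have "(c \<cdot>\<^sub>m e) * e = e * (c \<cdot>\<^sub>m e)" using e by (simp add: mult_smult_assoc_mat mult_smult_distrib)
    thus "(x + ?w - (x + u)) * e = e * (x + ?w - (x + u))" using x u e by (simp add: diff_simp2)
  qed (use x u e in auto)
  have "tr (\<Delta> (x + ?w) * ?w) = tr (\<Delta> (x + ?w) * u) + c * tr (\<Delta> (x + ?w) * e)"
    using C x w u e by (intro tr_lin_right) (auto intro: CD)
  moreover have "tr (\<Delta> x * ?w) = tr (\<Delta> x * u) + c * tr (\<Delta> x * e)"
    using C x u e by (intro tr_lin_right) (auto intro: CD)
  ultimately show ?thesis using 1 2 3 by (simp add: algebra_simps)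
qed

lemma tr_functional_additive: assumes K: "Kprop n \<Delta>" and C: "Cprop n \<Delta>" and H: "Hprop n \<Delta>"
  and u: "u \<in> carrier_mat n n" and x: "x \<in> carrier_mat n n" and z: "z \<in> carrier_mat n n"
  shows "tr (\<Delta> (x + z) * u) = tr (\<Delta> x * u) + tr (\<Delta> z * u)"
proof -
  let ?h = "\<lambda>x. tr (\<Delta> x * u)"
  have "AL n ?h" unfolding AL_def
  proof (intro ballI allI impI)
    fix x :: "complex mat" and i j c assume x: "x \<in> carrier_mat n n" and ij: "i < n" "j < n"
    have a: "?h (x + c \<cdot>\<^sub>m E n i j) = ?h x + c * (tr (\<Delta> x * E n i j) - tr (\<Delta> (x + u) * E n i j))"
      by (rule key_identity[OF K C x u E_carrier])
    have b: "?h (x + 1 \<cdot>\<^sub>m E n i j) = ?h x + 1 * (tr (\<Delta> x * E n i j) - tr (\<Delta> (x + u) * E n i j))"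
      by (rule key_identity[OF K C x u E_carrier])
    have "1 \<cdot>\<^sub>m E n i j = E n i j" by (rule eq_matI) auto
    with a b show "?h (x + c \<cdot>\<^sub>m E n i j) = ?h x + c * (?h (x + E n i j) - ?h x)" by simp
  qed
  moreover have "Hom n 1 ?h" unfolding Hom_def
  proof (intro ballI allI impI)
    fix x :: "complex mat" and l :: complex assume x: "x \<in> carrier_mat n n" and l: "l \<noteq> 0"
    have "\<Delta> (l \<cdot>\<^sub>m x) * u = l \<cdot>\<^sub>m (\<Delta> x * u)"
      using HD[OF H x] CD[OF C x] u by (simp add: mult_smult_assoc_mat)
    thus "?h (l \<cdot>\<^sub>m x) = l powi 1 * ?h x" using CD[OF C x] u by (simp add: tr_smult[of _ n])
  qed
  ultimately show ?thesis using AL_additive x z by blast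
qed

lemma Delta_additive: assumes K: "Kprop n \<Delta>" and C: "Cprop n \<Delta>" and H: "Hprop n \<Delta>"
  and x: "x \<in> carrier_mat n n" and z: "z \<in> carrier_mat n n"
  shows "\<Delta> (x + z) = \<Delta> x + \<Delta> z"
proof (rule mat_eq_by_tr)
  show "\<Delta> (x + z) \<in> carrier_mat n n" using C x z by (auto intro: CD)
  show "\<Delta> x + \<Delta> z \<in> carrier_mat n n" using CD[OF C z] by simp
  fix i j assume ij: "i < n" "j < n"
  have "(\<Delta> x + \<Delta> z) * E n i j = \<Delta> x * E n i j + \<Delta> z * E n i j"
    using C x z by (intro add_mult_distrib_mat) (auto intro: CD)
  hence "tr ((\<Delta> x + \<Delta> z) * E n i j) = tr (\<Delta> x * E n i j) + tr (\<Delta> z * E n i j)"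
    using CD[OF C x] CD[OF C z] by (simp add: tr_add[of _ n])
  thus "tr (\<Delta> (x + z) * E n i j) = tr ((\<Delta> x + \<Delta> z) * E n i j)"
    using tr_functional_additive[OF K C H E_carrier x z] by simp
qed


lemma comm_b: assumes "i < n" "j < n" "q < n" "0 < n" "j \<noteq> 0" "q \<noteq> i"
  shows "(E n i j + E n i 0) * (E n j q + (-1) \<cdot>\<^sub>m E n 0 q) = (E n j q + (-1) \<cdot>\<^sub>m E n 0 q) * (E n i j + E n i 0)"
proof -
  have "(E n i j + E n i 0) * (E n j q + (-1) \<cdot>\<^sub>m E n 0 q) = E n i q + (-1) \<cdot>\<^sub>m 0\<^sub>m n n + (0\<^sub>m n n + (-1) \<cdot>\<^sub>m E n i q)"
    using assms by (simp add: add_mult_distrib_mat[where nr=n and n=n and nc=n] mult_add_distrib_mat[where nr=n and n=n and nc=n] mult_smult_distrib[where nr=n and n=n and nc=n] mult_smult_assoc_mat[where nr=n and n=n and nc=n] E_mult_E)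
  moreover have "(E n j q + (-1) \<cdot>\<^sub>m E n 0 q) * (E n i j + E n i 0) = 0\<^sub>m n n + 0\<^sub>m n n + ((-1) \<cdot>\<^sub>m 0\<^sub>m n n + (-1) \<cdot>\<^sub>m 0\<^sub>m n n)"
    using assms by (simp add: add_mult_distrib_mat[where nr=n and n=n and nc=n] mult_add_distrib_mat[where nr=n and n=n and nc=n] mult_smult_distrib[where nr=n and n=n and nc=n] mult_smult_assoc_mat[where nr=n and n=n and nc=n] E_mult_E)
  ultimately show ?thesis by (auto intro!: eq_matI)
qed

lemma comm_d: assumes "i < n" "j < n" "0 < n" "i \<noteq> j" "i \<noteq> 0" "j \<noteq> 0"
  shows "(E n i j + E n j 0 + E n 0 i) * (E n j i + E n 0 j + E n i 0) = (E n j i + E n 0 j + E n i 0) * (E n i j + E n j 0 + E n 0 i)"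
proof -
  have "(E n i j + E n j 0 + E n 0 i) * (E n j i + E n 0 j + E n i 0) =
     E n i i + 0\<^sub>m n n + 0\<^sub>m n n + (0\<^sub>m n n + E n j j + 0\<^sub>m n n) + (0\<^sub>m n n + 0\<^sub>m n n + E n 0 0)"
    using assms by (simp add: add_mult_distrib_mat[where nr=n and n=n and nc=n] mult_add_distrib_mat[where nr=n and n=n and nc=n] mult_smult_distrib[where nr=n and n=n and nc=n] mult_smult_assoc_mat[where nr=n and n=n and nc=n] E_mult_E)
  moreover have "(E n j i + E n 0 j + E n i 0) * (E n i j + E n j 0 + E n 0 i) =
     E n j j + 0\<^sub>m n n + 0\<^sub>m n n + (0\<^sub>m n n + E n 0 0 + 0\<^sub>m n n) + (0\<^sub>m n n + 0\<^sub>m n n + E n i i)"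
    using assms by (simp add: add_mult_distrib_mat[where nr=n and n=n and nc=n] mult_add_distrib_mat[where nr=n and n=n and nc=n] mult_smult_distrib[where nr=n and n=n and nc=n] mult_smult_assoc_mat[where nr=n and n=n and nc=n] E_mult_E)
  ultimately show ?thesis by (auto intro!: eq_matI)
qed

lemma lin_C: "linmap n \<Delta> \<Longrightarrow> x \<in> carrier_mat n n \<Longrightarrow> \<Delta> x \<in> carrier_mat n n"
  unfolding linmap_def by blast
lemma lin_add: "linmap n \<Delta> \<Longrightarrow> x \<in> carrier_mat n n \<Longrightarrow> y \<in> carrier_mat n n \<Longrightarrow> \<Delta> (x + y) = \<Delta> x + \<Delta> y"
  unfolding linmap_def by blast

lemma tr_add_right: fixes M u v :: "complex mat"
  assumes "M \<in> carrier_mat n n" "u \<in> carrier_mat n n" "v \<in> carrier_mat n n"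
  shows "tr (M * (u + v)) = tr (M * u) + tr (M * v)"
  using assms by (simp add: mult_add_distrib_mat[where nr=n and n=n and nc=n] tr_add[of _ n])

lemma B_add1: assumes L: "linmap n \<Delta>" and x: "x \<in> carrier_mat n n" and x': "x' \<in> carrier_mat n n" and y: "y \<in> carrier_mat n n"
  shows "tr (\<Delta> (x + x') * y) = tr (\<Delta> x * y) + tr (\<Delta> x' * y)"
  using lin_C[OF L x] lin_C[OF L x'] y
  by (simp add: lin_add[OF L x x'] add_mult_distrib_mat[where nr=n and n=n and nc=n] tr_add[of _ n])

lemma B_comm: assumes L: "linmap n \<Delta>" and K: "Kprop n \<Delta>" and x: "x \<in> carrier_mat n n" and y: "y \<in> carrier_mat n n"
  and c: "x * y = y * x"
  shows "tr (\<Delta> x * y) = 0"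
proof -
  have xz: "x - 0\<^sub>m n n = x" by (rule eq_matI) (use x in auto)
  have "tr (\<Delta> x * y) = tr (\<Delta> (0\<^sub>m n n) * y)"
    by (rule KD[OF K x _ y]) (use c xz in auto)
  also have "\<dots> = 0" using linmap_zero[OF L] y by (simp add: tr_def)
  finally show ?thesis .
qed

lemma B_skew: assumes L: "linmap n \<Delta>" and K: "Kprop n \<Delta>" and x: "x \<in> carrier_mat n n" and y: "y \<in> carrier_mat n n"
  shows "tr (\<Delta> x * y) = - tr (\<Delta> y * x)"
proof -
  have xy: "x + y \<in> carrier_mat n n" using x y by simp
  have "0 = tr (\<Delta> (x + y) * (x + y))" using B_comm[OF L K xy xy] by simp
  also have "\<dots> = tr (\<Delta> x * (x + y)) + tr (\<Delta> y * (x + y))" by (rule B_add1[OF L x y xy])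
  also have "\<dots> = tr (\<Delta> x * x) + tr (\<Delta> x * y) + (tr (\<Delta> y * x) + tr (\<Delta> y * y))"
    using lin_C[OF L x] lin_C[OF L y] x y by (simp add: tr_add_right[of _ n])
  also have "tr (\<Delta> x * x) = 0" using B_comm[OF L K x x] by simp
  also have "tr (\<Delta> y * y) = 0" using B_comm[OF L K y y] by simp
  finally show ?thesis by (simp add: algebra_simps eq_neg_iff_add_eq_0)
qed

lemma unit_comm0: assumes "i < n" "j < n" "p < n" "q < n" "j \<noteq> p" "q \<noteq> i"
  shows "E n i j * E n p q = E n p q * E n i j"
  using assms by (simp add: E_mult_E)

lemma B_unit0: assumes L: "linmap n \<Delta>" and K: "Kprop n \<Delta>"
  and "i < n" "j < n" "p < n" "q < n" "j \<noteq> p" "q \<noteq> i"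
  shows "tr (\<Delta> (E n i j) * E n p q) = 0"
  by (rule B_comm[OF L K E_carrier E_carrier unit_comm0]) (use assms in auto)

lemma B_b: assumes L: "linmap n \<Delta>" and K: "Kprop n \<Delta>"
  and a: "i < n" "j < n" "q < n" "0 < n" "q \<noteq> i"
  shows "tr (\<Delta> (E n i j) * E n j q) = tr (\<Delta> (E n i 0) * E n 0 q)"
proof (cases "j = 0")
  case False
  have "0 = tr (\<Delta> (E n i j + E n i 0) * (E n j q + (-1) \<cdot>\<^sub>m E n 0 q))"
    using B_comm[OF L K _ _ comm_b] a False by simp
  also have "\<dots> = tr (\<Delta> (E n i j) * (E n j q + (-1) \<cdot>\<^sub>m E n 0 q)) + tr (\<Delta> (E n i 0) * (E n j q + (-1) \<cdot>\<^sub>m E n 0 q))"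
    by (rule B_add1[OF L]) auto
  also have "\<dots> = tr (\<Delta> (E n i j) * E n j q) + (-1) * tr (\<Delta> (E n i j) * E n 0 q)
     + (tr (\<Delta> (E n i 0) * E n j q) + (-1) * tr (\<Delta> (E n i 0) * E n 0 q))"
    using lin_C[OF L E_carrier, of i j] lin_C[OF L E_carrier, of i 0] by (simp add: tr_lin_right[of _ n])
  also have "tr (\<Delta> (E n i j) * E n 0 q) = 0" using B_unit0[OF L K] a False by simp
  also have "tr (\<Delta> (E n i 0) * E n j q) = 0" using B_unit0[OF L K] a False by simp
  finally show ?thesis by simp
qed simp

lemma B_d: assumes L: "linmap n \<Delta>" and K: "Kprop n \<Delta>"
  and a: "i < n" "j < n" "0 < n" "i \<noteq> j" "i \<noteq> 0" "j \<noteq> 0"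
  shows "tr (\<Delta> (E n i j) * E n j i) = tr (\<Delta> (E n i 0) * E n 0 i) - tr (\<Delta> (E n j 0) * E n 0 j)"
proof -
  let ?B = "\<lambda>x y. tr (\<Delta> x * y)"
  let ?y = "E n j i + E n 0 j + E n i 0"
  have y: "?y \<in> carrier_mat n n" by simp
  have tr3: "?B x ?y = ?B x (E n j i) + ?B x (E n 0 j) + ?B x (E n i 0)" if x: "x \<in> carrier_mat n n" for x
    using lin_C[OF L x] by (simp add: tr_add_right[of _ n])
  have "0 = ?B (E n i j + E n j 0 + E n 0 i) ?y"
    using B_comm[OF L K _ _ comm_d] a by simp
  also have "\<dots> = ?B (E n i j + E n j 0) ?y + ?B (E n 0 i) ?y" by (rule B_add1[OF L]) auto
  also have "?B (E n i j + E n j 0) ?y = ?B (E n i j) ?y + ?B (E n j 0) ?y" by (rule B_add1[OF L]) auto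
  finally have "0 = ?B (E n i j) ?y + ?B (E n j 0) ?y + ?B (E n 0 i) ?y" .
  hence "0 = ?B (E n i j) (E n j i) + ?B (E n i j) (E n 0 j) + ?B (E n i j) (E n i 0)
     + (?B (E n j 0) (E n j i) + ?B (E n j 0) (E n 0 j) + ?B (E n j 0) (E n i 0))
     + (?B (E n 0 i) (E n j i) + ?B (E n 0 i) (E n 0 j) + ?B (E n 0 i) (E n i 0))"
    by (simp only: tr3[OF E_carrier])
  moreover have "?B (E n i j) (E n 0 j) = 0" "?B (E n i j) (E n i 0) = 0"
    "?B (E n j 0) (E n j i) = 0" "?B (E n j 0) (E n i 0) = 0"
    "?B (E n 0 i) (E n j i) = 0" "?B (E n 0 i) (E n 0 j) = 0"
    using a by (auto intro!: B_unit0[OF L K])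
  moreover have "?B (E n 0 i) (E n i 0) = - ?B (E n i 0) (E n 0 i)" by (rule B_skew[OF L K]) auto
  ultimately show ?thesis by (simp add: algebra_simps)
qed

lemma B_formula: assumes L: "linmap n \<Delta>" and K: "Kprop n \<Delta>" and n: "0 < n"
  and a: "i < n" "j < n" "p < n" "q < n"
  shows "tr (\<Delta> (E n i j) * E n p q) =
    (if j = p then tr (\<Delta> (E n i 0) * E n 0 q) else 0) - (if q = i then tr (\<Delta> (E n p 0) * E n 0 j) else 0)"
proof -
  let ?B = "\<lambda>x y. tr (\<Delta> x * y)"
  have B00: "?B (E n k k) (E n k k) = 0" for k by (rule B_comm[OF L K]) auto
  consider "j \<noteq> p" "q \<noteq> i" | "j = p" "q \<noteq> i" | "j \<noteq> p" "q = i" | "j = p" "q = i" by blast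
  thus ?thesis
  proof cases
    case 1 thus ?thesis using B_unit0[OF L K a] by simp
  next
    case 2 thus ?thesis using B_b[OF L K a(1,2,4) n] by simp
  next
    case 3
    have "?B (E n i j) (E n p i) = - ?B (E n p i) (E n i j)" by (rule B_skew[OF L K]) auto
    also have "?B (E n p i) (E n i j) = ?B (E n p 0) (E n 0 j)" using B_b[OF L K a(3,1,2) n] 3 by simp
    finally show ?thesis using 3 by simp
  next
    case 4
    show ?thesis
    proof (cases "i = j")
      case True thus ?thesis using 4 B00 by simp
    next
      case ij: False
      show ?thesis
      proof (cases "j = 0")
        case True thus ?thesis using 4 B00[of 0] by simp
      next
        case j0: False
        show ?thesis
        proof (cases "i = 0")
          case True
          have "?B (E n 0 j) (E n j 0) = - ?B (E n j 0) (E n 0 j)" by (rule B_skew[OF L K]) auto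
          thus ?thesis using 4 True B00[of 0] by simp
        next
          case False
          thus ?thesis using 4 B_d[OF L K a(1,2) n ij False j0] by simp
        qed
      qed
    qed
  qed
qed

definition inner_B :: "nat \<Rightarrow> (complex mat \<Rightarrow> complex mat) \<Rightarrow> complex mat" where
  "inner_B n \<Delta> = mat n n (\<lambda>(q,i). tr (\<Delta> (E n i 0) * E n 0 q))"

lemma inner_B_carrier[simp]: "inner_B n \<Delta> \<in> carrier_mat n n" by (simp add: inner_B_def)
lemma inner_B_dims[simp]: "dim_row (inner_B n \<Delta>) = n" "dim_col (inner_B n \<Delta>) = n" by (auto simp: inner_B_def)

lemma lin_inner: assumes L: "linmap n \<Delta>" and K: "Kprop n \<Delta>" and n: "0 < n" and x: "x \<in> carrier_mat n n"
  shows "\<Delta> x = inner_B n \<Delta> * x - x * inner_B n \<Delta>"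
proof -
  let ?a = "inner_B n \<Delta>"
  have "\<Delta> x = (\<lambda>x. ?a * x - x * ?a) x"
  proof (rule linmap_agree[OF L inner_linmap[OF inner_B_carrier] _ x])
    fix i j assume ij: "i < n" "j < n"
    show "\<Delta> (E n i j) = ?a * E n i j - E n i j * ?a"
    proof (rule mat_eq_by_tr)
      show "\<Delta> (E n i j) \<in> carrier_mat n n" by (rule lin_C[OF L E_carrier])
      show "?a * E n i j - E n i j * ?a \<in> carrier_mat n n" by (auto intro: minus_carrier_mat)
      fix p q assume pq: "p < n" "q < n"
      have "tr ((?a * E n i j - E n i j * ?a) * E n p q) = (?a * E n i j - E n i j * ?a) $$ (q,p)"
        by (rule tr_E) (use pq in \<open>auto intro: minus_carrier_mat\<close>)
      also have "\<dots> = (if j = p then tr (\<Delta> (E n i 0) * E n 0 q) else 0) - (if q = i then tr (\<Delta> (E n p 0) * E n 0 j) else 0)"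
        using pq ij by (simp del: index_mult_mat add: index_mult_mat(2,3) mult_E_right mult_E_left inner_B_def)
      finally show "tr (\<Delta> (E n i j) * E n p q) = tr ((?a * E n i j - E n i j * ?a) * E n p q)"
        using B_formula[OF L K n ij pq] by simp
    qed
  qed
  thus ?thesis by simp
qed

lemma inner_is_derivation: assumes a: "a \<in> carrier_mat n n"
  shows "is_derivation n (\<lambda>x. a * x - x * a)"
proof -
  have L: "linmap n (\<lambda>x. a * x - x * a)" by (rule inner_linmap[OF a])
  have "a * (x * y) - x * y * a = (a * x - x * a) * y + x * (a * y - y * a)"
    if x: "x \<in> carrier_mat n n" and y: "y \<in> carrier_mat n n" for x y
  proof -
    have 1: "(a * x - x * a) * y = a * x * y - x * a * y"
      by (rule minus_mult_distrib_mat[where nr=n and n=n and nc=n]) (use a x y in auto)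
    have 2: "x * (a * y - y * a) = x * (a * y) - x * (y * a)"
      by (rule mult_minus_distrib_mat[where nr=n and n=n and nc=n]) (use a x y in auto)
    have 3: "a * x * y = a * (x * y)" "x * a * y = x * (a * y)" "x * y * a = x * (y * a)"
      using a x y by auto
    show ?thesis unfolding 1 2 3 by (rule eq_matI) (use a x y in auto)
  qed
  thus ?thesis using L unfolding linmap_def is_derivation_def by blast
qed

theorem theorem2p12:
  fixes n :: nat and \<Delta> :: "complex mat \<Rightarrow> complex mat"
  assumes "weak_2_local_derivation n \<Delta>"
  shows "is_derivation n \<Delta>"
proof (cases "n = 0")
  case True
  have C: "Cprop n \<Delta>" by (rule w2l_C[OF assms])
  have eq: "A = B" if "A \<in> carrier_mat n n" "B \<in> carrier_mat n n" for A B :: "complex mat"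
    by (rule eq_matI) (use that True in auto)
  show ?thesis unfolding is_derivation_def
    using CD[OF C] by (intro conjI ballI allI eq) (auto intro: mult_carrier_mat)
next
  case False
  hence n: "0 < n" by simp
  have C: "Cprop n \<Delta>" by (rule w2l_C[OF assms])
  have H: "Hprop n \<Delta>" by (rule w2l_H[OF assms])
  have K: "Kprop n \<Delta>" by (rule w2l_K[OF assms n])
  have L: "linmap n \<Delta>" unfolding linmap_def
    using CD[OF C] HD[OF H] Delta_additive[OF K C H] by blast
  have "is_derivation n (\<lambda>x. inner_B n \<Delta> * x - x * inner_B n \<Delta>)"
    by (rule inner_is_derivation) simp
  moreover have "\<forall>x \<in> carrier_mat n n. \<Delta> x = inner_B n \<Delta> * x - x * inner_B n \<Delta>"
    using lin_inner[OF L K n] by blast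
  ultimately show ?thesis unfolding is_derivation_def
    by (simp add: smult_carrier_mat mult_carrier_mat)
qed

end
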